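(* Fix $k\ge1$ and real foci $(u_1,v_1),\ldots,(u_k,v_k)$, and regard $d$ as an indeterminate (alternatively, regard all of $d,u_i,v_i$ as indeterminates). The polynomial $$p_k(x,y)=\prod_{\sigma\in\{0,1\}^k}\Bigl(d-\sum_{i=1}^k(-1)^{\sigma_i}\sqrt{(x-u_i)^2+(y-v_i)^2}\Bigr)$$ has total degree in $(x,y)$ exactly $2^k$ if $k$ is odd and exactly $2^k-\binom{k}{k/2}$ if $k$ is even. Moreover $p_k(x,y)=\det(x\cdot A_k+y\cdot B_k+C_k)$ for symmetric $2^k\times2^k$ matrices $A_k,B_k,C_k$, where $A_k,B_k$ have integer entries and the entries of $C_k$ are linear forms in $d,u_1,v_1,\ldots,u_k,v_k$.
   Context: The $k$-ellipse with foci $(u_i,v_i)$ and radius $d$ is $\{(x,y)\in\mathbb{R}^2:\sum_{i=1}^k\sqrt{(x-u_i)^2+(y-v_i)^2}=d\}$, and $p_k$ (the product above) is its defining polynomial. *)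

theory Defs
  imports Complex_Main "HOL-Library.FuncSet" "Jordan_Normal_Form.Determinant"
begin

definition kellipse_poly :: "nat \<Rightarrow> (nat \<Rightarrow> real) \<Rightarrow> (nat \<Rightarrow> real) \<Rightarrow> real \<Rightarrow> real \<Rightarrow> real \<Rightarrow> real" where
  "kellipse_poly k u v d x y =
     (\<Prod>\<sigma>\<in>({..<k} \<rightarrow>\<^sub>E {0, 1::nat}).
        d - (\<Sum>i<k. (-1) ^ (\<sigma> i) * sqrt ((x - u i)^2 + (y - v i)^2)))"

definition poly_xyd_total_xy_degree :: "(real \<Rightarrow> real \<Rightarrow> real \<Rightarrow> real) \<Rightarrow> nat \<Rightarrow> bool" where
  "poly_xyd_total_xy_degree f D \<longleftrightarrow>
     (\<exists>(P :: nat \<Rightarrow> nat \<Rightarrow> nat \<Rightarrow> real) N.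
        (\<forall>a b c. P a b c \<noteq> 0 \<longrightarrow> a \<le> N \<and> b \<le> N \<and> c \<le> N) \<and>
        (\<forall>d x y. f d x y = (\<Sum>a\<le>N. \<Sum>b\<le>N. \<Sum>c\<le>N. P a b c * x ^ a * y ^ b * d ^ c)) \<and>
        (\<forall>a b c. P a b c \<noteq> 0 \<longrightarrow> a + b \<le> D) \<and>
        (\<exists>a b c. P a b c \<noteq> 0 \<and> a + b = D))"

end

theory Submission
  imports Defs "HOL-Real_Asymp.Real_Asymp"
begin


fun Lf :: "nat \<Rightarrow> (nat \<Rightarrow> real) \<Rightarrow> (nat \<Rightarrow> real) \<Rightarrow> nat \<Rightarrow> nat \<Rightarrow> real" where
  "Lf 0 a b i j = 0"
| "Lf (Suc k) a b i j =
    (if i < 2^k then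
       (if j < 2^k then Lf k a b i j - (if i = j then a k else 0)
        else (if j - 2^k = i then - b k else 0))
     else
       (if j < 2^k then (if i - 2^k = j then - b k else 0)
        else Lf k a b (i - 2^k) (j - 2^k) + (if i = j then a k else 0)))"

lemma Lf_sym: "Lf k a b i j = Lf k a b j i"
  by (induction k arbitrary: i j) auto

lemma inj_upd_PiE: "inj_on (\<lambda>(y, g). g((k::nat) := y)) ({0,1::nat} \<times> ({..<k} \<rightarrow>\<^sub>E {0, 1::nat}))"
proof (rule inj_onI)
  fix p q
  assume "p \<in> {0,1::nat} \<times> ({..<k} \<rightarrow>\<^sub>E {0, 1::nat})" "q \<in> {0,1::nat} \<times> ({..<k} \<rightarrow>\<^sub>E {0, 1::nat})"
    and eq0: "(\<lambda>(y, g). g(k := y)) p = (\<lambda>(y, g). g(k := y)) q"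
  obtain y g y' g' where p: "p = (y, g)" and q: "q = (y', g')" by (cases p, cases q) 
  have g: "g \<in> {..<k} \<rightarrow>\<^sub>E {0, 1::nat}" and g': "g' \<in> {..<k} \<rightarrow>\<^sub>E {0, 1::nat}"
    using \<open>p \<in> _\<close> \<open>q \<in> _\<close> p q by auto
  have eq: "g(k := y) = g'(k := y')" using eq0 p q by simp
  have "y = y'" using fun_cong[OF eq, of k] by simp
  moreover have "g = g'"
  proof
    fix i show "g i = g' i"
    proof (cases "i < k")
      case True then have "i \<noteq> k" by simp
      then show ?thesis using fun_cong[OF eq, of i] by simp
    next
      case False then show ?thesis using PiE_arb[OF g, of i] PiE_arb[OF g', of i] by simp
    qed
  qed
  ultimately show "p = q" using p q by simp
qed

definition Pk :: "nat \<Rightarrow> (nat \<Rightarrow> real) \<Rightarrow> (nat \<Rightarrow> real) \<Rightarrow> real \<Rightarrow> real" where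
  "Pk k a b d = (\<Prod>\<sigma>\<in>({..<k} \<rightarrow>\<^sub>E {0, 1::nat}).
        d - (\<Sum>i<k. (-1) ^ (\<sigma> i) * sqrt ((a i)^2 + (b i)^2)))"

lemma Pk_Suc: "Pk (Suc k) a b d = Pk k a b (d - sqrt ((a k)^2 + (b k)^2)) * Pk k a b (d + sqrt ((a k)^2 + (b k)^2))"
proof -
  let ?r = "\<lambda>i. sqrt ((a i)^2 + (b i)^2)"
  let ?f = "\<lambda>k d \<sigma>. d - (\<Sum>i<k. (-1) ^ (\<sigma> i) * ?r i)"
  note inj = inj_upd_PiE[of k]
  have "Pk (Suc k) a b d = (\<Prod>\<sigma>\<in>((\<lambda>(y, g). g(k := y)) ` ({0,1::nat} \<times> ({..<k} \<rightarrow>\<^sub>E {0, 1::nat}))). ?f (Suc k) d \<sigma>)"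
    unfolding Pk_def lessThan_Suc PiE_insert_eq by simp
  also have "\<dots> = (\<Prod>p\<in>({0,1::nat} \<times> ({..<k} \<rightarrow>\<^sub>E {0, 1::nat})). ?f (Suc k) d ((\<lambda>(y, g). g(k := y)) p))"
    by (rule prod.reindex[OF inj, unfolded comp_def])
  also have "\<dots> = (\<Prod>y\<in>{0,1::nat}. \<Prod>g\<in>({..<k} \<rightarrow>\<^sub>E {0, 1::nat}). ?f (Suc k) d (g(k := y)))"
    unfolding prod.cartesian_product case_prod_unfold by (rule refl)
  also have "\<dots> = (\<Prod>g\<in>({..<k} \<rightarrow>\<^sub>E {0, 1::nat}). ?f k (d - ?r k) g) * (\<Prod>g\<in>({..<k} \<rightarrow>\<^sub>E {0, 1::nat}). ?f k (d + ?r k) g)"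
  proof -
    have e: "(\<Sum>i<Suc k. (-1) ^ ((g(k:=y)) i) * ?r i) = (\<Sum>i<k. (-1) ^ (g i) * ?r i) + (-1)^y * ?r k" for g and y::nat
    proof -
      have "(\<Sum>i<k. (-1) ^ ((g(k:=y)) i) * ?r i) = (\<Sum>i<k. (-1) ^ (g i) * ?r i)"
        by (intro sum.cong refl) (simp add: fun_upd_def)
      then show ?thesis by simp
    qed
    have "(\<Prod>y\<in>{0,1::nat}. \<Prod>g\<in>({..<k} \<rightarrow>\<^sub>E {0, 1::nat}). ?f (Suc k) d (g(k := y)))
       = (\<Prod>g\<in>({..<k} \<rightarrow>\<^sub>E {0, 1::nat}). ?f (Suc k) d (g(k := 0))) * (\<Prod>g\<in>({..<k} \<rightarrow>\<^sub>E {0, 1::nat}). ?f (Suc k) d (g(k := 1)))"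
      by simp
    also have "\<dots> = (\<Prod>g\<in>({..<k} \<rightarrow>\<^sub>E {0, 1::nat}). ?f k (d - ?r k) g) * (\<Prod>g\<in>({..<k} \<rightarrow>\<^sub>E {0, 1::nat}). ?f k (d + ?r k) g)"
      unfolding e by (simp add: algebra_simps)
    finally show ?thesis .
  qed
  finally show ?thesis unfolding Pk_def .
qed


definition Lm :: "nat \<Rightarrow> (nat \<Rightarrow> real) \<Rightarrow> (nat \<Rightarrow> real) \<Rightarrow> real \<Rightarrow> real mat" where
  "Lm k a b d = mat (2^k) (2^k) (\<lambda>(i,j). Lf k a b i j + (if i = j then d else 0))"

lemma Lm_carrier: "Lm k a b d \<in> carrier_mat (2^k) (2^k)"
  unfolding Lm_def by simp

lemma Lm_shift: "Lm k a b d + c \<cdot>\<^sub>m 1\<^sub>m (2^k) = Lm k a b (d + c)"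
  unfolding Lm_def by (rule eq_matI) auto

lemma quad_mat:
  fixes X :: "real mat"
  assumes X: "X \<in> carrier_mat n n"
    and pq: "p + q = s + t" and pqb: "p * q - \<beta> * \<beta> = s * t"
  shows "(X + p \<cdot>\<^sub>m 1\<^sub>m n) * (X + q \<cdot>\<^sub>m 1\<^sub>m n) - (\<beta> \<cdot>\<^sub>m 1\<^sub>m n) * (\<beta> \<cdot>\<^sub>m 1\<^sub>m n)
       = (X + s \<cdot>\<^sub>m 1\<^sub>m n) * (X + t \<cdot>\<^sub>m 1\<^sub>m n)"
proof (rule eq_matI)
  fix i j assume i: "i < dim_row ((X + s \<cdot>\<^sub>m 1\<^sub>m n) * (X + t \<cdot>\<^sub>m 1\<^sub>m n))"
    and j: "j < dim_col ((X + s \<cdot>\<^sub>m 1\<^sub>m n) * (X + t \<cdot>\<^sub>m 1\<^sub>m n))"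
  have i': "i < n" and j': "j < n" using i j X by auto
  have gen: "((X + p \<cdot>\<^sub>m 1\<^sub>m n) * (X + q \<cdot>\<^sub>m 1\<^sub>m n)) $$ (i,j)
      = (\<Sum>l<n. X $$ (i,l) * X $$ (l,j)) + (p + q) * X $$ (i,j) + (if i = j then p * q else 0)" for p q
  proof -
    have "((X + p \<cdot>\<^sub>m 1\<^sub>m n) * (X + q \<cdot>\<^sub>m 1\<^sub>m n)) $$ (i,j)
       = (\<Sum>l\<in>{0..<n}. (X $$ (i,l) + (if i = l then p else 0)) * (X $$ (l,j) + (if l = j then q else 0)))"
      using X i' j' by (simp add: scalar_prod_def) (intro sum.cong refl, auto)
    also have "\<dots> = (\<Sum>l\<in>{0..<n}. X $$ (i,l) * X $$ (l,j) + (if l = j then q * X $$ (i,l) else 0)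
          + (if l = i then p * X $$ (l,j) else 0) + (if l = i then (if i = j then p * q else 0) else 0))"
      by (rule sum.cong) (auto simp: algebra_simps)
    also have "\<dots> = (\<Sum>l<n. X $$ (i,l) * X $$ (l,j)) + (p + q) * X $$ (i,j) + (if i = j then p * q else 0)"
      using i' j' by (simp add: sum.distrib atLeast0LessThan distrib_right)
    finally show ?thesis .
  qed
  have b: "((\<beta> \<cdot>\<^sub>m 1\<^sub>m n) * (\<beta> \<cdot>\<^sub>m 1\<^sub>m n)) $$ (i,j) = (if i = j then \<beta> * \<beta> else 0)"
  proof -
    have "(\<beta> \<cdot>\<^sub>m 1\<^sub>m n) * (\<beta> \<cdot>\<^sub>m 1\<^sub>m n) = \<beta> \<cdot>\<^sub>m ((\<beta> \<cdot>\<^sub>m 1\<^sub>m n) * 1\<^sub>m n)"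
      by (rule mult_smult_distrib[of _ n n]) auto
    also have "\<dots> = \<beta> \<cdot>\<^sub>m (\<beta> \<cdot>\<^sub>m 1\<^sub>m n)" by simp
    finally have "(\<beta> \<cdot>\<^sub>m 1\<^sub>m n) * (\<beta> \<cdot>\<^sub>m 1\<^sub>m n) = \<beta> \<cdot>\<^sub>m (\<beta> \<cdot>\<^sub>m 1\<^sub>m n)" .
    then show ?thesis using i' j' by simp
  qed
  show "((X + p \<cdot>\<^sub>m 1\<^sub>m n) * (X + q \<cdot>\<^sub>m 1\<^sub>m n) - (\<beta> \<cdot>\<^sub>m 1\<^sub>m n) * (\<beta> \<cdot>\<^sub>m 1\<^sub>m n)) $$ (i,j)
      = ((X + s \<cdot>\<^sub>m 1\<^sub>m n) * (X + t \<cdot>\<^sub>m 1\<^sub>m n)) $$ (i,j)"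
    using i' j' X by (simp add: gen b pq pqb)
qed (use X in auto)


lemma Lm_Suc: "Lm (Suc k) a b d = four_block_mat (Lm k a b (d - a k)) ((- b k) \<cdot>\<^sub>m 1\<^sub>m (2^k))
    ((- b k) \<cdot>\<^sub>m 1\<^sub>m (2^k)) (Lm k a b (d + a k))"
  unfolding Lm_def by (rule eq_matI) auto

lemma det_Lm: "det (Lm k a b d) = Pk k a b d"
proof (induction k arbitrary: d)
  case 0
  have "det (Lm 0 a b d) = Lm 0 a b d $$ (0,0)" by (rule det_single) (simp add: Lm_def)
  also have "\<dots> = d" by (simp add: Lm_def)
  finally show ?case by (simp add: Pk_def)
next
  case (Suc k)
  let ?n = "2^k :: nat"
  let ?r = "sqrt ((a k)^2 + (b k)^2)"
  let ?X = "Lm k a b 0"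
  let ?B = "(- b k) \<cdot>\<^sub>m 1\<^sub>m ?n"
  have X: "?X \<in> carrier_mat ?n ?n" by (rule Lm_carrier)
  have sh: "Lm k a b c = ?X + c \<cdot>\<^sub>m 1\<^sub>m ?n" for c
    using Lm_shift[of k a b 0 c] by simp
  have B: "?B \<in> carrier_mat ?n ?n" by simp
  have comm: "?B * Lm k a b (d + a k) = Lm k a b (d + a k) * ?B"
  proof -
    have C: "Lm k a b (d + a k) \<in> carrier_mat ?n ?n" by (rule Lm_carrier)
    have "?B * Lm k a b (d + a k) = (- b k) \<cdot>\<^sub>m (1\<^sub>m ?n * Lm k a b (d + a k))"
      by (rule mult_smult_assoc_mat[OF one_carrier_mat C])
    also have "\<dots> = (- b k) \<cdot>\<^sub>m (Lm k a b (d + a k) * 1\<^sub>m ?n)" using C by simp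
    also have "\<dots> = Lm k a b (d + a k) * ?B"
      by (rule mult_smult_distrib[OF C one_carrier_mat, symmetric])
    finally show ?thesis .
  qed
  have rr: "?r * ?r = (a k)^2 + (b k)^2"
    by (simp add: real_sqrt_mult_self)
  have "det (Lm (Suc k) a b d) = det (Lm k a b (d - a k) * Lm k a b (d + a k) - ?B * ?B)"
    unfolding Lm_Suc by (rule det_four_block_mat[OF Lm_carrier B B Lm_carrier comm])
  also have "Lm k a b (d - a k) * Lm k a b (d + a k) - ?B * ?B
      = (?X + (d - ?r) \<cdot>\<^sub>m 1\<^sub>m ?n) * (?X + (d + ?r) \<cdot>\<^sub>m 1\<^sub>m ?n)"
    unfolding sh[of "d - a k"] sh[of "d + a k"] by (rule quad_mat[OF X]) (auto simp: algebra_simps power2_eq_square rr)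
  also have "det \<dots> = det (?X + (d - ?r) \<cdot>\<^sub>m 1\<^sub>m ?n) * det (?X + (d + ?r) \<cdot>\<^sub>m 1\<^sub>m ?n)"
    by (rule det_mult) (use X in auto)
  also have "\<dots> = Pk k a b (d - ?r) * Pk k a b (d + ?r)"
    unfolding sh[of "d - ?r", symmetric] sh[of "d + ?r", symmetric] Suc.IH ..
  finally show ?case unfolding Pk_Suc .
qed


lemma Lf_zero: "Lf k (\<lambda>_. 0) (\<lambda>_. 0) i j = 0"
  by (induction k arbitrary: i j) auto

lemma Lf_add: "Lf k (\<lambda>m. a m + a' m) (\<lambda>m. b m + b' m) i j = Lf k a b i j + Lf k a' b' i j"
  by (induction k arbitrary: i j) auto

lemma Lf_scale: "Lf k (\<lambda>m. c * a m) (\<lambda>m. c * b m) i j = c * Lf k a b i j"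
  by (induction k arbitrary: i j) (auto simp: algebra_simps)

lemma Lf_sum: "finite S \<Longrightarrow> Lf k (\<lambda>m. \<Sum>l\<in>S. f l m) (\<lambda>m. \<Sum>l\<in>S. g l m) i j = (\<Sum>l\<in>S. Lf k (f l) (g l) i j)"
proof (induction S rule: finite_induct)
  case empty then show ?case using Lf_zero by simp
next
  case (insert x F)
  then show ?case using Lf_add[of k "f x" "\<lambda>m. \<Sum>l\<in>F. f l m" "g x" "\<lambda>m. \<Sum>l\<in>F. g l m" i j] by simp
qed

lemma Lf_local: "(\<And>l. l < k \<Longrightarrow> a l = a' l) \<Longrightarrow> (\<And>l. l < k \<Longrightarrow> b l = b' l) \<Longrightarrow> Lf k a b i j = Lf k a' b' i j"
  by (induction k arbitrary: i j) auto

lemma Lf_int: "(\<And>l. a l \<in> \<int>) \<Longrightarrow> (\<And>l. b l \<in> \<int>) \<Longrightarrow> Lf k a b i j \<in> \<int>"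
  by (induction k arbitrary: i j) auto

definition ev :: "nat \<Rightarrow> nat \<Rightarrow> real" where "ev l m = (if m = l then 1 else 0)"

lemma Lf_linear:
  "Lf k (\<lambda>l. x - u l) (\<lambda>l. y - v l) i j =
     x * Lf k (\<lambda>_. 1) (\<lambda>_. 0) i j + y * Lf k (\<lambda>_. 0) (\<lambda>_. 1) i j +
     (\<Sum>l<k. u l * (- Lf k (ev l) (\<lambda>_. 0) i j) + v l * (- Lf k (\<lambda>_. 0) (ev l) i j))"
proof -
  have sd: "(\<Sum>la\<in>{..<k}. c la * ev la l) = c l" if "l < k" for c :: "nat \<Rightarrow> real" and l
  proof -
    have "(\<Sum>la\<in>{..<k}. c la * ev la l) = (\<Sum>la\<in>{..<k}. if la = l then c la else 0)"
      by (rule sum.cong) (auto simp: ev_def)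
    then show ?thesis using that by simp
  qed
  have "Lf k (\<lambda>l. x - u l) (\<lambda>l. y - v l) i j = Lf k (\<lambda>_. x) (\<lambda>_. y) i j + Lf k (\<lambda>l. - u l) (\<lambda>l. - v l) i j"
    using Lf_add[of k "\<lambda>_. x" "\<lambda>l. - u l" "\<lambda>_. y" "\<lambda>l. - v l" i j] by simp
  moreover have "Lf k (\<lambda>_. x) (\<lambda>_. y) i j = x * Lf k (\<lambda>_. 1) (\<lambda>_. 0) i j + y * Lf k (\<lambda>_. 0) (\<lambda>_. 1) i j"
    using Lf_add[of k "\<lambda>_. x" "\<lambda>_. 0" "\<lambda>_. 0" "\<lambda>_. y" i j]
      Lf_scale[of k x "\<lambda>_. 1" "\<lambda>_. 0" i j] Lf_scale[of k y "\<lambda>_. 0" "\<lambda>_. 1" i j] by simp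
  moreover have "Lf k (\<lambda>l. - u l) (\<lambda>l. - v l) i j
      = Lf k (\<lambda>m. \<Sum>l\<in>{..<k}. (- u l) * ev l m) (\<lambda>m. \<Sum>l\<in>{..<k}. (- v l) * ev l m) i j"
    by (rule Lf_local) (simp_all only: sd)
  moreover have "\<dots> = (\<Sum>l<k. Lf k (\<lambda>m. (- u l) * ev l m) (\<lambda>m. (- v l) * ev l m) i j)"
    by (rule Lf_sum) simp
  moreover have "Lf k (\<lambda>m. (- u l) * ev l m) (\<lambda>m. (- v l) * ev l m) i j
      = u l * (- Lf k (ev l) (\<lambda>_. 0) i j) + v l * (- Lf k (\<lambda>_. 0) (ev l) i j)" for l
    using Lf_add[of k "\<lambda>m. (- u l) * ev l m" "\<lambda>_. 0" "\<lambda>_. 0" "\<lambda>m. (- v l) * ev l m" i j]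
      Lf_scale[of k "- u l" "ev l" "\<lambda>_. 0" i j] Lf_scale[of k "- v l" "\<lambda>_. 0" "ev l" i j] by simp
  ultimately show ?thesis by simp
qed

lemma Pk_kellipse: "Pk k (\<lambda>l. x - u l) (\<lambda>l. y - v l) d = kellipse_poly k u v d x y"
  by (simp add: Pk_def kellipse_poly_def)

lemma part2:
  "\<exists>(A :: nat \<Rightarrow> nat \<Rightarrow> real) (B :: nat \<Rightarrow> nat \<Rightarrow> real)
            (C0 :: nat \<Rightarrow> nat \<Rightarrow> real) (U :: nat \<Rightarrow> nat \<Rightarrow> nat \<Rightarrow> real)
            (V :: nat \<Rightarrow> nat \<Rightarrow> nat \<Rightarrow> real).
            (\<forall>i < 2 ^ k. \<forall>j < 2 ^ k.
               A i j = A j i \<and> B i j = B j i \<and> C0 i j = C0 j i \<and>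
               (\<forall>l < k. U l i j = U l j i \<and> V l i j = V l j i) \<and>
               A i j \<in> \<int> \<and> B i j \<in> \<int>) \<and>
            (\<forall>(u' :: nat \<Rightarrow> real) (v' :: nat \<Rightarrow> real) d x y.
               kellipse_poly k u' v' d x y =
               det (mat (2 ^ k) (2 ^ k) (\<lambda>(i, j).
                  x * A i j + y * B i j +
                  (d * C0 i j + (\<Sum>l<k. u' l * U l i j + v' l * V l i j)))))"
proof -
  let ?A = "\<lambda>i j. Lf k (\<lambda>_. 1) (\<lambda>_. 0) i j"
  let ?B = "\<lambda>i j. Lf k (\<lambda>_. 0) (\<lambda>_. 1) i j"
  let ?C = "\<lambda>i j. if i = j then 1 else (0::real)"
  let ?U = "\<lambda>l i j. - Lf k (ev l) (\<lambda>_. 0) i j"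
  let ?V = "\<lambda>l i j. - Lf k (\<lambda>_. 0) (ev l) i j"
  have 1: "\<forall>i < 2 ^ k. \<forall>j < 2 ^ k.
               ?A i j = ?A j i \<and> ?B i j = ?B j i \<and> ?C i j = ?C j i \<and>
               (\<forall>l < k. ?U l i j = ?U l j i \<and> ?V l i j = ?V l j i) \<and>
               ?A i j \<in> \<int> \<and> ?B i j \<in> \<int>"
    by (auto intro: Lf_sym Lf_int)
  have 2: "\<forall>(u' :: nat \<Rightarrow> real) (v' :: nat \<Rightarrow> real) d x y.
               kellipse_poly k u' v' d x y =
               det (mat (2 ^ k) (2 ^ k) (\<lambda>(i, j).
                  x * ?A i j + y * ?B i j +
                  (d * ?C i j + (\<Sum>l<k. u' l * ?U l i j + v' l * ?V l i j))))"
  proof (intro allI)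
    fix u' v' :: "nat \<Rightarrow> real" and d x y :: real
    have "mat (2 ^ k) (2 ^ k) (\<lambda>(i, j). x * ?A i j + y * ?B i j + (d * ?C i j + (\<Sum>l<k. u' l * ?U l i j + v' l * ?V l i j)))
       = Lm k (\<lambda>l. x - u' l) (\<lambda>l. y - v' l) d"
      unfolding Lm_def by (rule eq_matI) (auto simp: Lf_linear)
    then show "kellipse_poly k u' v' d x y = det (mat (2 ^ k) (2 ^ k) (\<lambda>(i, j). x * ?A i j + y * ?B i j + (d * ?C i j + (\<Sum>l<k. u' l * ?U l i j + v' l * ?V l i j))))"
      by (simp add: det_Lm Pk_kellipse)
  qed
  show ?thesis by (intro exI) (rule conjI[OF 1 2])
qed


inductive tp :: "(real \<Rightarrow> real \<Rightarrow> real \<Rightarrow> real) \<Rightarrow> bool" where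
  tpm: "tp (\<lambda>d x y. c * x^a * y^b * d^e)"
| tpa: "tp f \<Longrightarrow> tp g \<Longrightarrow> tp (\<lambda>d x y. f d x y + g d x y)"

lemma tp_mono_mult: "tp g \<Longrightarrow> tp (\<lambda>d x y. (c * x^a * y^b * d^e) * g d x y)"
proof (induction g rule: tp.induct)
  case (tpm c' a' b' e')
  have eq: "(\<lambda>d x y. (c * x^a * y^b * d^e) * (c' * x^a' * y^b' * d^e'))
      = (\<lambda>d x y. (c*c') * x^(a+a') * y^(b+b') * d^(e+e'))"
    by (simp add: fun_eq_iff power_add algebra_simps)
  show ?case by (subst eq) (rule tp.tpm)
next
  case (tpa f g)
  have eq: "(\<lambda>d x y. (c * x^a * y^b * d^e) * (f d x y + g d x y))
     = (\<lambda>d x y. (c * x^a * y^b * d^e) * f d x y + (c * x^a * y^b * d^e) * g d x y)"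
    by (simp add: fun_eq_iff algebra_simps)
  show ?case by (subst eq) (rule tp.tpa[OF tpa.IH])
qed

lemma tp_mult: "tp f \<Longrightarrow> tp g \<Longrightarrow> tp (\<lambda>d x y. f d x y * g d x y)"
proof (induction f rule: tp.induct)
  case (tpm c a b e)
  then show ?case by (rule tp_mono_mult)
next
  case (tpa f1 f2)
  have eq: "(\<lambda>d x y. (f1 d x y + f2 d x y) * g d x y) = (\<lambda>d x y. f1 d x y * g d x y + f2 d x y * g d x y)"
    by (simp add: fun_eq_iff algebra_simps)
  show ?case by (subst eq) (intro tp.tpa tpa.IH tpa.prems)
qed

lemma tp_const: "tp (\<lambda>d x y. c)"
  using tp.tpm[of c 0 0 0] by simp

lemma tp_x: "tp (\<lambda>d x y. x)"
  using tp.tpm[of 1 1 0 0] by simp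

lemma tp_y: "tp (\<lambda>d x y. y)"
  using tp.tpm[of 1 0 1 0] by simp

lemma tp_d: "tp (\<lambda>d x y. d)"
  using tp.tpm[of 1 0 0 1] by simp

lemma tp_sum: "finite S \<Longrightarrow> (\<And>i. i \<in> S \<Longrightarrow> tp (f i)) \<Longrightarrow> tp (\<lambda>d x y. \<Sum>i\<in>S. f i d x y)"
proof (induction S rule: finite_induct)
  case empty then show ?case using tp_const[of 0] by simp
next
  case (insert a F)
  have "tp (\<lambda>d x y. f a d x y + (\<Sum>i\<in>F. f i d x y))"
    by (rule tp.tpa) (use insert in auto)
  then show ?case using insert by simp
qed

lemma tp_prod: "finite S \<Longrightarrow> (\<And>i. i \<in> S \<Longrightarrow> tp (f i)) \<Longrightarrow> tp (\<lambda>d x y. \<Prod>i\<in>S. f i d x y)"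
proof (induction S rule: finite_induct)
  case empty then show ?case using tp_const[of 1] by simp
next
  case (insert a F)
  have fa: "tp (\<lambda>d x y. f a d x y)" using insert by simp
  have "tp (\<lambda>d x y. f a d x y * (\<Prod>i\<in>F. f i d x y))"
    by (rule tp_mult[OF fa]) (use insert in auto)
  then show ?case using insert by simp
qed

lemma tp_lin: "tp (\<lambda>d x y. x * \<alpha> + y * \<beta> + \<gamma> + d * \<delta>)"
proof -
  have a: "tp (\<lambda>d x y. x * \<alpha>)" by (rule tp_mult[OF tp_x tp_const])
  have b: "tp (\<lambda>d x y. y * \<beta>)" by (rule tp_mult[OF tp_y tp_const])
  have c: "tp (\<lambda>d x y. d * \<delta>)" by (rule tp_mult[OF tp_d tp_const])
  show ?thesis by (intro tp.tpa a b c tp_const)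
qed

lemma tp_F: "tp (kellipse_poly k u v)"
proof -
  let ?n = "2^k :: nat"
  let ?E = "\<lambda>i j d x y. Lf k (\<lambda>l. x - u l) (\<lambda>l. y - v l) i j + (if i = j then d else 0)"
  have entry: "tp (?E i j)" for i j
  proof -
    have "?E i j = (\<lambda>d x y. x * Lf k (\<lambda>_. 1) (\<lambda>_. 0) i j + y * Lf k (\<lambda>_. 0) (\<lambda>_. 1) i j +
     (\<Sum>l<k. u l * (- Lf k (ev l) (\<lambda>_. 0) i j) + v l * (- Lf k (\<lambda>_. 0) (ev l) i j)) + d * (if i = j then 1 else 0))"
      by (simp add: fun_eq_iff Lf_linear)
    then show ?thesis using tp_lin by simp
  qed
  have eq: "kellipse_poly k u v = (\<lambda>d x y. \<Sum>p\<in>{p. p permutes {0..<?n}}. of_int (signof p) * (\<Prod>i\<in>{0..<?n}. ?E i (p i) d x y))"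
  proof (intro ext)
    fix d x y
    have "kellipse_poly k u v d x y = det (Lm k (\<lambda>l. x - u l) (\<lambda>l. y - v l) d)"
      by (simp add: det_Lm Pk_kellipse)
    also have "\<dots> = (\<Sum>p\<in>{p. p permutes {0..<?n}}. signof p * (\<Prod>i\<in>{0..<?n}. Lm k (\<lambda>l. x - u l) (\<lambda>l. y - v l) d $$ (i, p i)))"
      by (rule det_def'[OF Lm_carrier])
    also have "\<dots> = (\<Sum>p\<in>{p. p permutes {0..<?n}}. of_int (signof p) * (\<Prod>i\<in>{0..<?n}. ?E i (p i) d x y))"
    proof (rule sum.cong[OF refl])
      fix p assume p: "p \<in> {p. p permutes {0..<?n}}"
      have "(\<Prod>i\<in>{0..<?n}. Lm k (\<lambda>l. x - u l) (\<lambda>l. y - v l) d $$ (i, p i)) = (\<Prod>i\<in>{0..<?n}. ?E i (p i) d x y)"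
      proof (rule prod.cong[OF refl])
        fix i assume i: "i \<in> {0..<?n}"
        then have "p i < ?n" using p by (simp add: permutes_in_image)
        then show "Lm k (\<lambda>l. x - u l) (\<lambda>l. y - v l) d $$ (i, p i) = ?E i (p i) d x y"
          using i by (simp add: Lm_def)
      qed
      then show "signof p * (\<Prod>i\<in>{0..<?n}. Lm k (\<lambda>l. x - u l) (\<lambda>l. y - v l) d $$ (i, p i)) = of_int (signof p) * (\<Prod>i\<in>{0..<?n}. ?E i (p i) d x y)"
        by simp
    qed
    finally show "kellipse_poly k u v d x y = (\<Sum>p\<in>{p. p permutes {0..<?n}}. of_int (signof p) * (\<Prod>i\<in>{0..<?n}. ?E i (p i) d x y))" .
  qed
  show ?thesis unfolding eq
    by (intro tp_sum tp_mult[OF tp_const] tp_prod entry finite_permutations) auto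
qed


definition tsum :: "(nat \<Rightarrow> nat \<Rightarrow> nat \<Rightarrow> real) \<Rightarrow> nat \<Rightarrow> real \<Rightarrow> real \<Rightarrow> real \<Rightarrow> real" where
  "tsum P N d x y = (\<Sum>a\<le>N. \<Sum>b\<le>N. \<Sum>c\<le>N. P a b c * x ^ a * y ^ b * d ^ c)"

lemma sum_ext_le: "(\<Sum>i\<le>(N::nat). h i) = (\<Sum>i\<le>N1. h i)" if "\<And>i. N1 < i \<Longrightarrow> h i = 0" "N1 \<le> N"
proof (rule sum.mono_neutral_right)
  show "finite {..N}" by simp
  show "{..N1} \<subseteq> {..N}" using that(2) by auto
  show "\<forall>i\<in>{..N} - {..N1}. h i = 0" using that(1) by auto
qed

lemma tsum_ext:
  assumes supp: "\<forall>a b c. P a b c \<noteq> 0 \<longrightarrow> a \<le> N1 \<and> b \<le> N1 \<and> c \<le> N1" and le: "N1 \<le> N"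
  shows "tsum P N d x y = tsum P N1 d x y"
proof -
  have z: "P a b c = 0" if "N1 < a \<or> N1 < b \<or> N1 < c" for a b c
    using supp that by force
  have inner: "(\<Sum>c\<le>N. P a b c * x ^ a * y ^ b * d ^ c) = (\<Sum>c\<le>N1. P a b c * x ^ a * y ^ b * d ^ c)" for a b
    by (rule sum_ext_le[OF _ le]) (simp add: z)
  have mid: "(\<Sum>b\<le>N. \<Sum>c\<le>N1. P a b c * x ^ a * y ^ b * d ^ c) = (\<Sum>b\<le>N1. \<Sum>c\<le>N1. P a b c * x ^ a * y ^ b * d ^ c)" for a
    by (rule sum_ext_le[OF _ le]) (simp add: z)
  have outer: "(\<Sum>a\<le>N. \<Sum>b\<le>N1. \<Sum>c\<le>N1. P a b c * x ^ a * y ^ b * d ^ c) = (\<Sum>a\<le>N1. \<Sum>b\<le>N1. \<Sum>c\<le>N1. P a b c * x ^ a * y ^ b * d ^ c)"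
    by (rule sum_ext_le[OF _ le]) (simp add: z)
  show ?thesis unfolding tsum_def inner mid outer ..
qed

lemma delta_le: "e \<le> (N::nat) \<Longrightarrow> (\<Sum>i\<le>N. (if i = e then g i else 0)) = (g e :: real)"
  by (subst sum.delta) auto

lemma pull_if: "(\<Sum>i\<in>A. if P then f i else 0) = (if P then (\<Sum>i\<in>A. f i) else (0::real))"
  by (cases P) simp_all

lemma tp_rep: "tp f \<Longrightarrow> \<exists>P N. (\<forall>a b c. P a b c \<noteq> 0 \<longrightarrow> a \<le> N \<and> b \<le> N \<and> c \<le> N) \<and> (\<forall>d x y. f d x y = tsum P N d x y)"
proof (induction f rule: tp.induct)
  case (tpm c a b e)
  let ?N = "max a (max b e)"
  let ?P = "\<lambda>a' b' e'. if a' = a \<and> b' = b \<and> e' = e then c else 0"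
  have "c * x^a * y^b * d^e = tsum ?P ?N d x y" for d x y
  proof -
    have "tsum ?P ?N d x y = (\<Sum>a'\<le>?N. \<Sum>b'\<le>?N. \<Sum>e'\<le>?N.
        (if a' = a then (if b' = b then (if e' = e then c * x ^ a' * y ^ b' * d ^ e' else 0) else 0) else 0))"
      unfolding tsum_def by (intro sum.cong refl) auto
    also have "\<dots> = c * x^a * y^b * d^e"
      by (simp add: pull_if delta_le max.coboundedI1 max.coboundedI2)
    finally show ?thesis by simp
  qed
  then show ?case by (intro exI[of _ ?P] exI[of _ ?N]) auto
next
  case (tpa f g)
  from tpa.IH(1) obtain P1 N1 where P1: "\<forall>a b c. P1 a b c \<noteq> 0 \<longrightarrow> a \<le> N1 \<and> b \<le> N1 \<and> c \<le> N1"
    and f: "\<forall>d x y. f d x y = tsum P1 N1 d x y" by blast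
  from tpa.IH(2) obtain P2 N2 where P2: "\<forall>a b c. P2 a b c \<noteq> 0 \<longrightarrow> a \<le> N2 \<and> b \<le> N2 \<and> c \<le> N2"
    and g: "\<forall>d x y. g d x y = tsum P2 N2 d x y" by blast
  let ?N = "max N1 N2"
  let ?P = "\<lambda>a b c. P1 a b c + P2 a b c"
  have supp: "\<forall>a b c. ?P a b c \<noteq> 0 \<longrightarrow> a \<le> ?N \<and> b \<le> ?N \<and> c \<le> ?N"
    using P1 P2 by (metis add.right_neutral add_0 max.coboundedI1 max.coboundedI2)
  have "f d x y + g d x y = tsum ?P ?N d x y" for d x y
  proof -
    have "tsum ?P ?N d x y = tsum P1 ?N d x y + tsum P2 ?N d x y"
      unfolding tsum_def by (simp add: sum.distrib distrib_right)
    also have "\<dots> = tsum P1 N1 d x y + tsum P2 N2 d x y"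
      using tsum_ext[OF P1, of ?N] tsum_ext[OF P2, of ?N] by simp
    finally show ?thesis using f g by simp
  qed
  then show ?case using supp by (intro exI[of _ ?P] exI[of _ ?N]) auto
qed


lemma inv_pow_tendsto: "0 < m \<Longrightarrow> ((\<lambda>t::real. c / t ^ m) \<longlongrightarrow> 0) at_top"
  by (rule tendsto_divide_0[OF tendsto_const])
     (rule filterlim_at_top_imp_at_infinity[OF filterlim_pow_at_top[OF _ filterlim_ident]])

lemma L_lim:
  fixes c :: "nat \<Rightarrow> real"
  assumes z: "\<forall>j. D < j \<and> j \<le> M \<longrightarrow> c j = 0"
  shows "((\<lambda>t. (\<Sum>j\<le>M. c j * t^j) / t^D) \<longlongrightarrow> (if D \<le> M then c D else 0)) at_top"
proof -
  let ?h = "\<lambda>j t. if j < D then c j / t^(D-j) else if j = D then c j else 0"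
  have ev: "eventually (\<lambda>t. (\<Sum>j\<le>M. ?h j t) = (\<Sum>j\<le>M. c j * t^j) / t^D) at_top"
    using eventually_gt_at_top[of 0]
  proof eventually_elim
    case (elim t)
    have "(\<Sum>j\<le>M. c j * t^j) / t^D = (\<Sum>j\<le>M. c j * t^j / t^D)" by (rule sum_divide_distrib)
    also have "\<dots> = (\<Sum>j\<le>M. ?h j t)"
    proof (rule sum.cong[OF refl])
      fix j assume j: "j \<in> {..M}"
      show "c j * t^j / t^D = ?h j t"
      proof (cases "j < D")
        case True
        have "t^D = t^j * t^(D-j)" using True by (simp add: power_add[symmetric])
        then show ?thesis using True elim by simp
      next
        case False
        then show ?thesis using z j elim by auto
      qed
    qed
    finally show ?case by simp
  qed
  have "((\<lambda>t. \<Sum>j\<le>M. ?h j t) \<longlongrightarrow> (\<Sum>j\<le>M. if j = D then c j else 0)) at_top"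
  proof (rule tendsto_sum)
    fix j assume "j \<in> {..M}"
    show "((\<lambda>t. ?h j t) \<longlongrightarrow> (if j = D then c j else 0)) at_top"
    proof (cases "j < D")
      case True then show ?thesis using inv_pow_tendsto[of "D - j" "c j"] by simp
    next
      case False then show ?thesis by simp
    qed
  qed
  moreover have "(\<Sum>j\<le>M. if j = D then c j else 0) = (if D \<le> M then c D else 0)"
    by (subst sum.delta) auto
  ultimately show ?thesis using tendsto_cong[OF ev] by simp
qed

lemma vanish:
  fixes c :: "nat \<Rightarrow> real"
  assumes bound: "\<forall>t\<ge>1. \<bar>\<Sum>j\<le>M. c j * t^j\<bar> \<le> C * t^D"
  shows "\<forall>j. D < j \<and> j \<le> M \<longrightarrow> c j = 0"
proof (rule ccontr)
  assume "\<not> ?thesis"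
  then have ne: "{j. D < j \<and> j \<le> M \<and> c j \<noteq> 0} \<noteq> {}" by auto
  let ?S = "{j. D < j \<and> j \<le> M \<and> c j \<noteq> 0}"
  have fin: "finite ?S" by (rule finite_subset[of _ "{..M}"]) auto
  define m where "m = Max ?S"
  have mS: "m \<in> ?S" unfolding m_def using Max_in[OF fin ne] .
  have above: "\<forall>j. m < j \<and> j \<le> M \<longrightarrow> c j = 0"
  proof (intro allI impI)
    fix j assume j: "m < j \<and> j \<le> M"
    show "c j = 0"
    proof (rule ccontr)
      assume "c j \<noteq> 0"
      then have "j \<in> ?S" using j mS by auto
      then have "j \<le> m" unfolding m_def using Max_ge[OF fin] by blast
      then show False using j by simp
    qed
  qed
  have lim1: "((\<lambda>t. (\<Sum>j\<le>M. c j * t^j) / t^m) \<longlongrightarrow> c m) at_top"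
    using L_lim[OF above] mS by simp
  have lim0: "((\<lambda>t. (\<Sum>j\<le>M. c j * t^j) / t^m) \<longlongrightarrow> 0) at_top"
  proof (rule tendsto_sandwich[of "\<lambda>t. - (C / t^(m - D))" _ _ "\<lambda>t. C / t^(m - D)"])
    have ev: "eventually (\<lambda>t. \<bar>(\<Sum>j\<le>M. c j * t^j) / t^m\<bar> \<le> C / t^(m - D)) at_top"
      using eventually_ge_at_top[of 1]
    proof eventually_elim
      case (elim t)
      have tm: "t^m = t^D * t^(m-D)" using mS by (simp add: power_add[symmetric])
      have pos: "t^m > 0" using elim by simp
      have "\<bar>(\<Sum>j\<le>M. c j * t^j) / t^m\<bar> = \<bar>\<Sum>j\<le>M. c j * t^j\<bar> / t^m" using pos by simp
      also have "\<dots> \<le> C * t^D / t^m" using bound elim pos by (simp add: divide_right_mono)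
      also have "\<dots> = C / t^(m - D)" using tm elim by simp
      finally show ?case .
    qed
    show "eventually (\<lambda>t. - (C / t^(m - D)) \<le> (\<Sum>j\<le>M. c j * t^j) / t^m) at_top"
      using ev by eventually_elim linarith
    show "eventually (\<lambda>t. (\<Sum>j\<le>M. c j * t^j) / t^m \<le> C / t^(m - D)) at_top"
      using ev by eventually_elim linarith
    show "((\<lambda>t. - (C / t^(m - D))) \<longlongrightarrow> 0) at_top"
      using tendsto_minus[OF inv_pow_tendsto[of "m - D" C]] mS by simp
    show "((\<lambda>t. C / t^(m - D)) \<longlongrightarrow> 0) at_top"
      using inv_pow_tendsto[of "m - D" C] mS by simp
  qed
  have "c m = 0" using tendsto_unique[OF _ lim1 lim0] by simp
  then show False using mS by simp
qed


lemma s_card: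
  assumes s: "\<sigma> \<in> {..<k} \<rightarrow>\<^sub>E {0, 1::nat}"
  shows "(\<Sum>i<k. (-1::real)^(\<sigma> i)) = real k - 2 * real (card {i\<in>{..<k}. \<sigma> i = 1})"
proof -
  have v: "\<sigma> i = 0 \<or> \<sigma> i = 1" if "i < k" for i using s that by (auto simp: PiE_iff)
  have "(\<Sum>i<k. (-1::real)^(\<sigma> i)) = (\<Sum>i<k. if \<sigma> i = 1 then -1 else 1)"
    by (rule sum.cong[OF refl]) (use v in force)
  also have "\<dots> = (\<Sum>i\<in>{..<k} \<inter> {i. \<sigma> i = 1}. -1) + (\<Sum>i\<in>{..<k} \<inter> - {i. \<sigma> i = 1}. 1)"
    by (rule sum.If_cases) simp
  also have "\<dots> = - real (card ({..<k} \<inter> {i. \<sigma> i = 1})) + real (card ({..<k} \<inter> - {i. \<sigma> i = 1}))"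
    by simp
  also have "card ({..<k} \<inter> - {i. \<sigma> i = 1}) = k - card ({..<k} \<inter> {i. \<sigma> i = 1})"
  proof -
    have "{..<k} \<inter> - {i. \<sigma> i = 1} = {..<k} - ({..<k} \<inter> {i. \<sigma> i = 1})" by auto
    then show ?thesis by (simp add: card_Diff_subset)
  qed
  also have "({..<k} \<inter> {i. \<sigma> i = 1}) = {i\<in>{..<k}. \<sigma> i = 1}" by auto
  finally have e: "(\<Sum>i<k. (-1::real)^(\<sigma> i)) = - real (card {i\<in>{..<k}. \<sigma> i = 1}) + real (k - card {i\<in>{..<k}. \<sigma> i = 1})" .
  have c: "card {i\<in>{..<k}. \<sigma> i = 1} \<le> k"
    using card_mono[of "{..<k}" "{i\<in>{..<k}. \<sigma> i = 1}"] by auto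
  show ?thesis unfolding e using c by (simp add: of_nat_diff)
qed

lemma card_sub_k:
  "card {\<sigma> \<in> {..<k} \<rightarrow>\<^sub>E {0, 1::nat}. card {i\<in>{..<k}. \<sigma> i = 1} = m} = k choose m"
proof -
  let ?A = "{\<sigma> \<in> {..<k} \<rightarrow>\<^sub>E {0, 1::nat}. card {i\<in>{..<k}. \<sigma> i = 1} = m}"
  let ?B = "{S. S \<subseteq> {..<k} \<and> card S = m}"
  let ?f = "\<lambda>\<sigma>. {i\<in>{..<k}. \<sigma> i = (1::nat)}"
  let ?g = "\<lambda>S. (\<lambda>i\<in>{..<k}. if i \<in> S then 1 else (0::nat))"
  have "bij_betw ?f ?A ?B"
  proof (rule bij_betw_byWitness[where f' = ?g])
    show "\<forall>\<sigma>\<in>?A. ?g (?f \<sigma>) = \<sigma>"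
    proof
      fix \<sigma> assume "\<sigma> \<in> ?A"
      then have s: "\<sigma> \<in> {..<k} \<rightarrow>\<^sub>E {0, 1::nat}" by simp
      show "?g (?f \<sigma>) = \<sigma>"
      proof
        fix i show "?g (?f \<sigma>) i = \<sigma> i"
        proof (cases "i < k")
          case True
          then have "\<sigma> i \<in> {0,1}" using s by (auto simp: PiE_iff)
          then show ?thesis using True by auto
        next
          case False
          then show ?thesis using PiE_arb[OF s, of i] by simp
        qed
      qed
    qed
    show "\<forall>S\<in>?B. ?f (?g S) = S" by auto
    show "?f ` ?A \<subseteq> ?B" by auto
    show "?g ` ?B \<subseteq> ?A"
    proof
      fix \<sigma> assume "\<sigma> \<in> ?g ` ?B"
      then obtain S where S: "S \<in> ?B" and e: "\<sigma> = ?g S" by blast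
      have "?f (?g S) = S" using S by auto
      then show "\<sigma> \<in> ?A" using S e by (auto simp: PiE_iff)
    qed
  qed
  then have "card ?A = card ?B" by (rule bij_betw_same_card)
  also have "\<dots> = k choose m" using n_subsets[of "{..<k}" m] by simp
  finally show ?thesis .
qed

lemma card_Z:
  "card {\<sigma> \<in> {..<k} \<rightarrow>\<^sub>E {0, 1::nat}. (\<Sum>i<k. (-1::real)^(\<sigma> i)) = 0}
     = (if odd k then 0 else k choose (k div 2))"
proof -
  have "{\<sigma> \<in> {..<k} \<rightarrow>\<^sub>E {0, 1::nat}. (\<Sum>i<k. (-1::real)^(\<sigma> i)) = 0}
      = {\<sigma> \<in> {..<k} \<rightarrow>\<^sub>E {0, 1::nat}. 2 * card {i\<in>{..<k}. \<sigma> i = 1} = k}"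
  proof (rule Collect_cong)
    fix \<sigma>
    show "(\<sigma> \<in> {..<k} \<rightarrow>\<^sub>E {0, 1::nat} \<and> (\<Sum>i<k. (-1::real)^(\<sigma> i)) = 0) =
          (\<sigma> \<in> {..<k} \<rightarrow>\<^sub>E {0, 1::nat} \<and> 2 * card {i\<in>{..<k}. \<sigma> i = 1} = k)"
    proof (cases "\<sigma> \<in> {..<k} \<rightarrow>\<^sub>E {0, 1::nat}")
      case True
      have "(real k - 2 * real (card {i\<in>{..<k}. \<sigma> i = 1}) = 0) = (2 * card {i\<in>{..<k}. \<sigma> i = 1} = k)"
        by linarith
      then show ?thesis using s_card[OF True] True by simp
    qed simp
  qed
  also have "\<dots> = (if odd k then {} else {\<sigma> \<in> {..<k} \<rightarrow>\<^sub>E {0, 1::nat}. card {i\<in>{..<k}. \<sigma> i = 1} = k div 2})"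
  proof (cases "odd k")
    case True
    have "2 * card {i\<in>{..<k}. \<sigma> i = 1} \<noteq> k" for \<sigma> :: "nat \<Rightarrow> nat"
      using True by (metis dvd_triv_left)
    then show ?thesis using True by simp
  next
    case False
    have "(2 * card {i\<in>{..<k}. \<sigma> i = 1} = k) = (card {i\<in>{..<k}. \<sigma> i = 1} = k div 2)" for \<sigma> :: "nat \<Rightarrow> nat"
      using False by presburger
    then show ?thesis using False by simp
  qed
  finally have "card {\<sigma> \<in> {..<k} \<rightarrow>\<^sub>E {0, 1::nat}. (\<Sum>i<k. (-1::real)^(\<sigma> i)) = 0} = card (if odd k then {} else {\<sigma> \<in> {..<k} \<rightarrow>\<^sub>E {0, 1::nat}. card {i\<in>{..<k}. \<sigma> i = 1} = k div 2})"
    by simp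
  then show ?thesis using card_sub_k[of k "k div 2"] by simp
qed


lemma dist_bound:
  assumes t: "0 \<le> t"
  shows "\<bar>sqrt ((t*\<xi> - u)^2 + (t*\<eta> - v)^2) - t * sqrt (\<xi>^2 + \<eta>^2)\<bar> \<le> sqrt (u^2 + v^2)"
proof -
  let ?p = "Complex (t*\<xi>) (t*\<eta>)" and ?q = "Complex u v"
  have 1: "cmod (?p - ?q) = sqrt ((t*\<xi> - u)^2 + (t*\<eta> - v)^2)" by (simp add: cmod_def)
  have "cmod ?p = sqrt (t^2 * (\<xi>^2 + \<eta>^2))" by (simp add: cmod_def power_mult_distrib algebra_simps)
  also have "\<dots> = t * sqrt (\<xi>^2 + \<eta>^2)" using t by (simp add: real_sqrt_mult)
  finally have 2: "cmod ?p = t * sqrt (\<xi>^2 + \<eta>^2)" .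
  have 3: "cmod ?q = sqrt (u^2 + v^2)" by (simp add: cmod_def)
  have "\<bar>cmod (?p - ?q) - cmod ?p\<bar> \<le> cmod ((?p - ?q) - ?p)" by (rule norm_triangle_ineq3)
  also have "cmod ((?p - ?q) - ?p) = cmod ?q" by (simp add: norm_minus_commute)
  finally show ?thesis using 1 2 3 by simp
qed

lemma abs_signed_sum: "\<bar>\<Sum>i<k. (-1::real)^(\<sigma> i) * w i\<bar> \<le> (\<Sum>i<k. \<bar>w i\<bar>)"
proof -
  have "\<bar>\<Sum>i<k. (-1::real)^(\<sigma> i) * w i\<bar> \<le> (\<Sum>i<k. \<bar>(-1::real)^(\<sigma> i) * w i\<bar>)" by (rule sum_abs)
  also have "\<dots> = (\<Sum>i<k. \<bar>w i\<bar>)" by (simp add: abs_mult power_abs)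
  finally show ?thesis .
qed

lemma growth:
  fixes k :: nat and u v :: "nat \<Rightarrow> real" and \<xi> \<eta> d :: real
  defines "Z \<equiv> {\<sigma> \<in> {..<k} \<rightarrow>\<^sub>E {0, 1::nat}. (\<Sum>i<k. (-1::real)^(\<sigma> i)) = 0}"
  shows "\<exists>C. \<forall>t\<ge>1. \<bar>kellipse_poly k u v d (t*\<xi>) (t*\<eta>)\<bar> \<le> C * t^(2^k - card Z)"
proof -
  let ?E = "{..<k} \<rightarrow>\<^sub>E {0, 1::nat}"
  let ?R = "sqrt (\<xi>^2 + \<eta>^2)"
  let ?m = "\<lambda>i. sqrt ((u i)^2 + (v i)^2)"
  let ?r = "\<lambda>t i. sqrt ((t*\<xi> - u i)^2 + (t*\<eta> - v i)^2)"
  define K0 where "K0 = \<bar>d\<bar> + (\<Sum>i<k. ?m i)"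
  define K1 where "K1 = \<bar>d\<bar> + real k * ?R + (\<Sum>i<k. ?m i)"
  define D where "D = 2^k - card Z"
  have finE: "finite ?E" by (simp add: finite_PiE)
  have ZE: "Z \<subseteq> ?E" unfolding Z_def by auto
  have cardE: "card ?E = 2^k" by (simp add: card_PiE numeral_2_eq_2)
  have mnn: "0 \<le> (\<Sum>i<k. ?m i)" by (simp add: sum_nonneg)
  have K0: "0 \<le> K0" unfolding K0_def using mnn by simp
  have K1: "0 \<le> K1" unfolding K1_def using mnn by simp
  have fb: "\<bar>d - (\<Sum>i<k. (-1)^(\<sigma> i) * ?r t i)\<bar> \<le> (if \<sigma> \<in> Z then K0 else t * K1)"
    if t: "1 \<le> t" and s: "\<sigma> \<in> ?E" for t \<sigma>
  proof (cases "\<sigma> \<in> Z")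
    case True
    then have s0: "(\<Sum>i<k. (-1::real)^(\<sigma> i)) = 0" unfolding Z_def by simp
    have h: "(\<Sum>i<k. (-1)^(\<sigma> i) * (?r t i - t * ?R)) = (\<Sum>i<k. (-1)^(\<sigma> i) * ?r t i) - (\<Sum>i<k. (-1::real)^(\<sigma> i)) * (t * ?R)"
      by (simp add: right_diff_distrib sum_subtractf sum_distrib_right)
    have e: "(\<Sum>i<k. (-1)^(\<sigma> i) * ?r t i) = (\<Sum>i<k. (-1)^(\<sigma> i) * (?r t i - t * ?R))" unfolding h s0 by simp
    have "\<bar>\<Sum>i<k. (-1)^(\<sigma> i) * (?r t i - t * ?R)\<bar> \<le> (\<Sum>i<k. \<bar>?r t i - t * ?R\<bar>)" by (rule abs_signed_sum)
    also have "\<dots> \<le> (\<Sum>i<k. ?m i)" by (rule sum_mono) (rule dist_bound, use t in simp)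
    finally have "\<bar>\<Sum>i<k. (-1)^(\<sigma> i) * ?r t i\<bar> \<le> (\<Sum>i<k. ?m i)" unfolding e .
    then show ?thesis using True unfolding K0_def by simp
  next
    case False
    have "\<bar>\<Sum>i<k. (-1)^(\<sigma> i) * ?r t i\<bar> \<le> (\<Sum>i<k. \<bar>?r t i\<bar>)" by (rule abs_signed_sum)
    also have "\<dots> \<le> (\<Sum>i<k. t * ?R + ?m i)"
    proof (rule sum_mono)
      fix i
      have "\<bar>?r t i - t * ?R\<bar> \<le> ?m i" by (rule dist_bound) (use t in simp)
      then show "\<bar>?r t i\<bar> \<le> t * ?R + ?m i" by simp
    qed
    also have "\<dots> = real k * t * ?R + (\<Sum>i<k. ?m i)" by (simp add: sum.distrib)
    finally have a: "\<bar>\<Sum>i<k. (-1)^(\<sigma> i) * ?r t i\<bar> \<le> real k * t * ?R + (\<Sum>i<k. ?m i)" .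
    have b: "\<bar>d\<bar> \<le> t * \<bar>d\<bar>" using t by (simp add: mult_le_cancel_right1)
    have c: "(\<Sum>i<k. ?m i) \<le> t * (\<Sum>i<k. ?m i)" using t mnn by (simp add: mult_le_cancel_right1)
    have "\<bar>d - (\<Sum>i<k. (-1)^(\<sigma> i) * ?r t i)\<bar> \<le> \<bar>d\<bar> + real k * t * ?R + (\<Sum>i<k. ?m i)"
      using a by linarith
    also have "\<dots> \<le> t * K1" unfolding K1_def using b c by (simp add: algebra_simps)
    finally show ?thesis using False by simp
  qed
  have "\<bar>kellipse_poly k u v d (t*\<xi>) (t*\<eta>)\<bar> \<le> (K0^card Z * K1^D) * t^D" if t: "1 \<le> t" for t
  proof -
    have "\<bar>kellipse_poly k u v d (t*\<xi>) (t*\<eta>)\<bar> = (\<Prod>\<sigma>\<in>?E. \<bar>d - (\<Sum>i<k. (-1)^(\<sigma> i) * ?r t i)\<bar>)"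
      unfolding kellipse_poly_def by (simp add: abs_prod)
    also have "\<dots> \<le> (\<Prod>\<sigma>\<in>?E. if \<sigma> \<in> Z then K0 else t * K1)"
      by (rule prod_mono) (use fb[OF t] in auto)
    also have "\<dots> = (\<Prod>\<sigma>\<in>?E \<inter> {\<sigma>. \<sigma> \<in> Z}. K0) * (\<Prod>\<sigma>\<in>?E \<inter> - {\<sigma>. \<sigma> \<in> Z}. t * K1)"
      by (rule prod.If_cases[OF finE])
    also have "?E \<inter> {\<sigma>. \<sigma> \<in> Z} = Z" using ZE by blast
    also have "?E \<inter> - {\<sigma>. \<sigma> \<in> Z} = ?E - Z" by auto
    also have "(\<Prod>\<sigma>\<in>Z. K0) * (\<Prod>\<sigma>\<in>?E - Z. t * K1) = K0^card Z * (t * K1)^D"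
      using card_Diff_subset[OF finite_subset[OF ZE finE] ZE] cardE unfolding D_def by simp
    also have "\<dots> = (K0^card Z * K1^D) * t^D" by (simp add: power_mult_distrib)
    finally show ?thesis .
  qed
  then show ?thesis unfolding D_def by blast
qed


lemma lim1: "((\<lambda>t::real. sqrt ((t - u)^2 + (0 - v)^2) - t) \<longlongrightarrow> -u) at_top"
  by real_asymp

lemma lim2: "((\<lambda>t::real. sqrt ((t - u)^2 + (0 - v)^2) / t) \<longlongrightarrow> 1) at_top"
  by real_asymp

lemma limit:
  fixes k :: nat and u v :: "nat \<Rightarrow> real"
  defines "Z \<equiv> {\<sigma> \<in> {..<k} \<rightarrow>\<^sub>E {0, 1::nat}. (\<Sum>i<k. (-1::real)^(\<sigma> i)) = 0}"
  shows "\<exists>d0 L. L \<noteq> 0 \<and> ((\<lambda>t. kellipse_poly k u v d0 t 0 / t^(2^k - card Z)) \<longlongrightarrow> L) at_top"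
proof -
  let ?E = "{..<k} \<rightarrow>\<^sub>E {0, 1::nat}"
  let ?r = "\<lambda>t i. sqrt ((t - u i)^2 + (0 - v i)^2)"
  let ?s = "\<lambda>\<sigma>. (\<Sum>i<k. (-1::real)^(\<sigma> i))"
  define d0 where "d0 = 1 + (\<Sum>i<k. \<bar>u i\<bar>)"
  define D where "D = 2^k - card Z"
  let ?f = "\<lambda>\<sigma> t. d0 - (\<Sum>i<k. (-1)^(\<sigma> i) * ?r t i)"
  let ?h = "\<lambda>\<sigma> t. if \<sigma> \<in> Z then d0 - (\<Sum>i<k. (-1)^(\<sigma> i) * (?r t i - t)) else d0 / t - (\<Sum>i<k. (-1)^(\<sigma> i) * (?r t i / t))"
  let ?l = "\<lambda>\<sigma>. if \<sigma> \<in> Z then d0 - (\<Sum>i<k. (-1)^(\<sigma> i) * (- u i)) else 0 - (\<Sum>i<k. (-1)^(\<sigma> i) * 1)"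
  have finE: "finite ?E" by (simp add: finite_PiE)
  have ZE: "Z \<subseteq> ?E" unfolding Z_def by auto
  have cardE: "card ?E = 2^k" by (simp add: card_PiE numeral_2_eq_2)
  have lim_h: "((\<lambda>t. ?h \<sigma> t) \<longlongrightarrow> ?l \<sigma>) at_top" for \<sigma>
  proof (cases "\<sigma> \<in> Z")
    case True
    have "((\<lambda>t. d0 - (\<Sum>i<k. (-1)^(\<sigma> i) * (?r t i - t))) \<longlongrightarrow> d0 - (\<Sum>i<k. (-1)^(\<sigma> i) * (- u i))) at_top"
      by (intro tendsto_intros lim1)
    then show ?thesis using True by simp
  next
    case False
    have d: "((\<lambda>t. d0 / t) \<longlongrightarrow> 0) at_top"
      by (rule tendsto_divide_0[OF tendsto_const filterlim_at_top_imp_at_infinity[OF filterlim_ident]])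
    have "((\<lambda>t. d0 / t - (\<Sum>i<k. (-1)^(\<sigma> i) * (?r t i / t))) \<longlongrightarrow> 0 - (\<Sum>i<k. (-1)^(\<sigma> i) * 1)) at_top"
      by (intro tendsto_intros lim2 d)
    then show ?thesis using False by simp
  qed
  have lim: "((\<lambda>t. \<Prod>\<sigma>\<in>?E. ?h \<sigma> t) \<longlongrightarrow> (\<Prod>\<sigma>\<in>?E. ?l \<sigma>)) at_top"
    by (rule tendsto_prod) (rule lim_h)
  have ev: "eventually (\<lambda>t. (\<Prod>\<sigma>\<in>?E. ?h \<sigma> t) = kellipse_poly k u v d0 t 0 / t^D) at_top"
    using eventually_gt_at_top[of 0]
  proof eventually_elim
    case (elim t)
    have hf: "?h \<sigma> t = (if \<sigma> \<in> Z then ?f \<sigma> t else ?f \<sigma> t / t)" for \<sigma>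
    proof (cases "\<sigma> \<in> Z")
      case True
      then have s0: "?s \<sigma> = 0" unfolding Z_def by simp
      have h: "(\<Sum>i<k. (-1)^(\<sigma> i) * (?r t i - t)) = (\<Sum>i<k. (-1)^(\<sigma> i) * ?r t i) - ?s \<sigma> * t"
        by (simp add: right_diff_distrib sum_subtractf sum_distrib_right)
      show ?thesis using True unfolding h s0 by simp
    next
      case False
      have "?f \<sigma> t / t = d0 / t - (\<Sum>i<k. (-1)^(\<sigma> i) * ?r t i) / t" by (rule diff_divide_distrib)
      also have "(\<Sum>i<k. (-1)^(\<sigma> i) * ?r t i) / t = (\<Sum>i<k. (-1)^(\<sigma> i) * (?r t i / t))"
        by (simp add: sum_divide_distrib)
      finally show ?thesis using False by simp
    qed
    have "(\<Prod>\<sigma>\<in>?E. ?h \<sigma> t) = (\<Prod>\<sigma>\<in>?E. if \<sigma> \<in> Z then ?f \<sigma> t else ?f \<sigma> t / t)"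
      unfolding hf ..
    also have "\<dots> = (\<Prod>\<sigma>\<in>?E \<inter> {\<sigma>. \<sigma> \<in> Z}. ?f \<sigma> t) * (\<Prod>\<sigma>\<in>?E \<inter> - {\<sigma>. \<sigma> \<in> Z}. ?f \<sigma> t / t)"
      by (rule prod.If_cases[OF finE])
    also have "\<dots> = (\<Prod>\<sigma>\<in>?E \<inter> {\<sigma>. \<sigma> \<in> Z}. ?f \<sigma> t) * (\<Prod>\<sigma>\<in>?E \<inter> - {\<sigma>. \<sigma> \<in> Z}. ?f \<sigma> t) / t ^ card (?E \<inter> - {\<sigma>. \<sigma> \<in> Z})"
      by (simp add: prod_dividef)
    also have "(\<Prod>\<sigma>\<in>?E \<inter> {\<sigma>. \<sigma> \<in> Z}. ?f \<sigma> t) * (\<Prod>\<sigma>\<in>?E \<inter> - {\<sigma>. \<sigma> \<in> Z}. ?f \<sigma> t) = (\<Prod>\<sigma>\<in>?E. ?f \<sigma> t)"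
      using prod.If_cases[OF finE, of "\<lambda>\<sigma>. \<sigma> \<in> Z" "\<lambda>\<sigma>. ?f \<sigma> t" "\<lambda>\<sigma>. ?f \<sigma> t"] by simp
    also have "(\<Prod>\<sigma>\<in>?E. ?f \<sigma> t) = kellipse_poly k u v d0 t 0" unfolding kellipse_poly_def ..
    also have "?E \<inter> - {\<sigma>. \<sigma> \<in> Z} = ?E - Z" by auto
    also have "card (?E - Z) = D"
      using card_Diff_subset[OF finite_subset[OF ZE finE] ZE] cardE unfolding D_def by simp
    finally show ?case by simp
  qed
  have Lnz: "(\<Prod>\<sigma>\<in>?E. ?l \<sigma>) \<noteq> 0"
  proof -
    have "?l \<sigma> \<noteq> 0" if s: "\<sigma> \<in> ?E" for \<sigma>
    proof (cases "\<sigma> \<in> Z")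
      case True
      have "\<bar>\<Sum>i<k. (-1::real)^(\<sigma> i) * u i\<bar> \<le> (\<Sum>i<k. \<bar>u i\<bar>)"
      proof -
        have "\<bar>\<Sum>i<k. (-1::real)^(\<sigma> i) * u i\<bar> \<le> (\<Sum>i<k. \<bar>(-1::real)^(\<sigma> i) * u i\<bar>)" by (rule sum_abs)
        also have "\<dots> = (\<Sum>i<k. \<bar>u i\<bar>)" by (simp add: abs_mult power_abs)
        finally show ?thesis .
      qed
      moreover have "(\<Sum>i<k. (-1::real)^(\<sigma> i) * (- u i)) = - (\<Sum>i<k. (-1::real)^(\<sigma> i) * u i)"
        by (simp add: sum_negf[symmetric])
      ultimately show ?thesis using True unfolding d0_def by auto
    next
      case False
      then have "?s \<sigma> \<noteq> 0" using s unfolding Z_def by auto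
      then show ?thesis using False by simp
    qed
    then show ?thesis using finE by (simp add: prod_zero_iff)
  qed
  show ?thesis
    using Lnz tendsto_cong[OF ev] lim unfolding D_def by blast
qed


definition gj :: "(nat \<Rightarrow> nat \<Rightarrow> nat \<Rightarrow> real) \<Rightarrow> nat \<Rightarrow> nat \<Rightarrow> real \<Rightarrow> real \<Rightarrow> real \<Rightarrow> real" where
  "gj P N j x y d = (\<Sum>a\<le>N. \<Sum>b\<le>N. \<Sum>c\<le>N. (if a + b = j then P a b c * x ^ a * y ^ b * d ^ c else 0))"

lemma swap4: "(\<Sum>j\<in>J. \<Sum>a\<in>A. \<Sum>b\<in>B. \<Sum>c\<in>C. T j a b c) = (\<Sum>a\<in>A. \<Sum>b\<in>B. \<Sum>c\<in>C. \<Sum>j\<in>J. (T j a b c :: real))"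
proof -
  have "(\<Sum>j\<in>J. \<Sum>a\<in>A. \<Sum>b\<in>B. \<Sum>c\<in>C. T j a b c) = (\<Sum>a\<in>A. \<Sum>j\<in>J. \<Sum>b\<in>B. \<Sum>c\<in>C. T j a b c)"
    by (rule sum.swap)
  also have "\<dots> = (\<Sum>a\<in>A. \<Sum>b\<in>B. \<Sum>j\<in>J. \<Sum>c\<in>C. T j a b c)"
    by (rule sum.cong[OF refl], rule sum.swap)
  also have "\<dots> = (\<Sum>a\<in>A. \<Sum>b\<in>B. \<Sum>c\<in>C. \<Sum>j\<in>J. T j a b c)"
    by (intro sum.cong refl, rule sum.swap)
  finally show ?thesis .
qed

lemma swapQ:
  "(\<Sum>j\<le>2*N. if Q j then gj P N j x y d * t^j else 0)
    = (\<Sum>a\<le>N. \<Sum>b\<le>N. \<Sum>c\<le>N. if Q (a+b) then P a b c * (t*x)^a * (t*y)^b * d^c else 0)"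
proof -
  let ?T = "\<lambda>j a b c. if a + b = j \<and> Q j then P a b c * x ^ a * y ^ b * d ^ c * t^j else 0"
  have "(if Q j then gj P N j x y d * t^j else 0) = (\<Sum>a\<le>N. \<Sum>b\<le>N. \<Sum>c\<le>N. ?T j a b c)" for j
    unfolding gj_def by (cases "Q j") (simp_all add: sum_distrib_right if_distrib[of "\<lambda>z. z * _"] cong: if_cong)
  then have "(\<Sum>j\<le>2*N. if Q j then gj P N j x y d * t^j else 0) = (\<Sum>j\<le>2*N. \<Sum>a\<le>N. \<Sum>b\<le>N. \<Sum>c\<le>N. ?T j a b c)"
    by simp
  also have "\<dots> = (\<Sum>a\<le>N. \<Sum>b\<le>N. \<Sum>c\<le>N. \<Sum>j\<le>2*N. ?T j a b c)" by (rule swap4)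
  also have "\<dots> = (\<Sum>a\<le>N. \<Sum>b\<le>N. \<Sum>c\<le>N. if Q (a+b) then P a b c * (t*x)^a * (t*y)^b * d^c else 0)"
  proof (intro sum.cong refl)
    fix a b c assume a: "a \<in> {..N}" and b: "b \<in> {..N}"
    have "(\<Sum>j\<le>2*N. ?T j a b c) = (\<Sum>j\<le>2*N. if j = a + b then (if Q (a+b) then P a b c * x ^ a * y ^ b * d ^ c * t^(a+b) else 0) else 0)"
      by (intro sum.cong refl) auto
    also have "\<dots> = (if Q (a+b) then P a b c * x ^ a * y ^ b * d ^ c * t^(a+b) else 0)"
      using a b by (subst sum.delta) auto
    also have "\<dots> = (if Q (a+b) then P a b c * (t*x)^a * (t*y)^b * d^c else 0)"
      by (simp add: power_mult_distrib power_add)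
    finally show "(\<Sum>j\<le>2*N. ?T j a b c) = (if Q (a+b) then P a b c * (t*x)^a * (t*y)^b * d^c else 0)" .
  qed
  finally show ?thesis .
qed


lemma part1:
  fixes k :: nat and u v :: "nat \<Rightarrow> real"
  shows "poly_xyd_total_xy_degree (kellipse_poly k u v)
           (if odd k then 2 ^ k else 2 ^ k - (k choose (k div 2)))"
proof -
  define Z where "Z = {\<sigma> \<in> {..<k} \<rightarrow>\<^sub>E {0, 1::nat}. (\<Sum>i<k. (-1::real)^(\<sigma> i)) = 0}"
  define D where "D = 2^k - card Z"
  have Dval: "D = (if odd k then 2 ^ k else 2 ^ k - (k choose (k div 2)))"
    unfolding D_def Z_def card_Z by simp
  obtain P N where supp: "\<forall>a b c. P a b c \<noteq> 0 \<longrightarrow> a \<le> N \<and> b \<le> N \<and> c \<le> N"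
    and rep: "\<forall>d x y. kellipse_poly k u v d x y = tsum P N d x y"
    using tp_rep[OF tp_F[of k u v]] by blast
  let ?F = "kellipse_poly k u v"
  have Fexp: "?F d (t*x) (t*y) = (\<Sum>j\<le>2*N. gj P N j x y d * t^j)" for d x y t
    using swapQ[where Q="\<lambda>_. True" and N=N and P=P and x=x and y=y and d=d and t=t] rep unfolding tsum_def by simp
  have van: "gj P N j x y d = 0" if "D < j" "j \<le> 2*N" for x y d j
  proof -
    obtain C where C: "\<forall>t\<ge>1. \<bar>?F d (t*x) (t*y)\<bar> \<le> C * t^(2^k - card Z)"
      using growth[of k u v d x y] unfolding Z_def by blast
    have "\<forall>t\<ge>1. \<bar>\<Sum>j\<le>2*N. gj P N j x y d * t^j\<bar> \<le> C * t^D"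
      using C unfolding Fexp D_def by simp
    from vanish[OF this] that show ?thesis by blast
  qed
  define P' where "P' = (\<lambda>a b c. if a + b \<le> D then P a b c else 0)"
  have supp': "\<forall>a b c. P' a b c \<noteq> 0 \<longrightarrow> a \<le> N \<and> b \<le> N \<and> c \<le> N"
    using supp unfolding P'_def by simp
  have rep': "\<forall>d x y. ?F d x y = (\<Sum>a\<le>N. \<Sum>b\<le>N. \<Sum>c\<le>N. P' a b c * x ^ a * y ^ b * d ^ c)"
  proof (intro allI)
    fix d x y
    have "?F d x y = ?F d (1*x) (1*y)" by simp
    also have "\<dots> = (\<Sum>j\<le>2*N. gj P N j x y d * 1^j)" by (rule Fexp)
    also have "\<dots> = (\<Sum>j\<le>2*N. if j \<le> D then gj P N j x y d * 1^j else 0)"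
      by (intro sum.cong refl) (auto simp: van)
    also have "\<dots> = (\<Sum>a\<le>N. \<Sum>b\<le>N. \<Sum>c\<le>N. if a + b \<le> D then P a b c * (1*x)^a * (1*y)^b * d^c else 0)"
      by (rule swapQ)
    also have "\<dots> = (\<Sum>a\<le>N. \<Sum>b\<le>N. \<Sum>c\<le>N. P' a b c * x ^ a * y ^ b * d ^ c)"
      unfolding P'_def by (intro sum.cong refl) simp
    finally show "?F d x y = (\<Sum>a\<le>N. \<Sum>b\<le>N. \<Sum>c\<le>N. P' a b c * x ^ a * y ^ b * d ^ c)" .
  qed
  have deg: "\<forall>a b c. P' a b c \<noteq> 0 \<longrightarrow> a + b \<le> D" unfolding P'_def by simp
  obtain d0 L where L: "L \<noteq> 0" and limL: "((\<lambda>t. ?F d0 t 0 / t^(2^k - card Z)) \<longlongrightarrow> L) at_top"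
    using limit[of k u v] unfolding Z_def by blast
  have "((\<lambda>t. (\<Sum>j\<le>2*N. gj P N j 1 0 d0 * t^j) / t^D) \<longlongrightarrow> (if D \<le> 2*N then gj P N D 1 0 d0 else 0)) at_top"
    by (rule L_lim) (auto simp: van)
  moreover have "(\<lambda>t. (\<Sum>j\<le>2*N. gj P N j 1 0 d0 * t^j) / t^D) = (\<lambda>t. ?F d0 t 0 / t^(2^k - card Z))"
    using Fexp[of d0 _ 1 0] unfolding D_def by (simp add: fun_eq_iff)
  ultimately have "L = (if D \<le> 2*N then gj P N D 1 0 d0 else 0)"
    using tendsto_unique[OF _ limL] by simp
  then have gD: "gj P N D 1 0 d0 \<noteq> 0" using L by (auto split: if_splits)
  then obtain a where "(\<Sum>b\<le>N. \<Sum>c\<le>N. (if a + b = D then P a b c * 1 ^ a * 0 ^ b * d0 ^ c else 0)) \<noteq> 0"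
    unfolding gj_def by (meson sum.not_neutral_contains_not_neutral)
  then obtain b where "(\<Sum>c\<le>N. (if a + b = D then P a b c * 1 ^ a * 0 ^ b * d0 ^ c else 0)) \<noteq> 0"
    by (meson sum.not_neutral_contains_not_neutral)
  then have "\<exists>c\<in>{..N}. (if a + b = D then P a b c * 1 ^ a * 0 ^ b * d0 ^ c else 0) \<noteq> 0"
    by (rule sum.not_neutral_contains_not_neutral) blast
  then obtain c where "(if a + b = D then P a b c * 1 ^ a * 0 ^ b * d0 ^ c else 0) \<noteq> 0"
    by blast
  then have ex: "P' a b c \<noteq> 0 \<and> a + b = D" unfolding P'_def by (auto split: if_splits)
  show ?thesis
    unfolding poly_xyd_total_xy_degree_def Dval[symmetric]
    using supp' rep' deg ex by blast
qed


theorem theorem1: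
  fixes k :: nat and u v :: "nat \<Rightarrow> real"
  assumes "k \<ge> 1"
  shows "poly_xyd_total_xy_degree (kellipse_poly k u v)
           (if odd k then 2 ^ k else 2 ^ k - (k choose (k div 2)))
       \<and> (\<exists>(A :: nat \<Rightarrow> nat \<Rightarrow> real) (B :: nat \<Rightarrow> nat \<Rightarrow> real)
            (C0 :: nat \<Rightarrow> nat \<Rightarrow> real) (U :: nat \<Rightarrow> nat \<Rightarrow> nat \<Rightarrow> real)
            (V :: nat \<Rightarrow> nat \<Rightarrow> nat \<Rightarrow> real).
            (\<forall>i < 2 ^ k. \<forall>j < 2 ^ k.
               A i j = A j i \<and> B i j = B j i \<and> C0 i j = C0 j i \<and>
               (\<forall>l < k. U l i j = U l j i \<and> V l i j = V l j i) \<and>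
               A i j \<in> \<int> \<and> B i j \<in> \<int>) \<and>
            (\<forall>(u' :: nat \<Rightarrow> real) (v' :: nat \<Rightarrow> real) d x y.
               kellipse_poly k u' v' d x y =
               det (mat (2 ^ k) (2 ^ k) (\<lambda>(i, j).
                  x * A i j + y * B i j +
                  (d * C0 i j + (\<Sum>l<k. u' l * U l i j + v' l * V l i j))))))"
    by (rule conjI[OF part1 part2])

end
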